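(* Consider the $(1,\lambda)$-CSA-ES with $\lambda\ge1$, $0<c\le1$ and $d_\sigma>0$, applied to $f(x)=[x]_1$ on $\mathbb{R}^n$. Then for every $t$, $$\mathrm{Var}\Big(\ln\Big(\frac{\sigma_{t+1}}{\sigma_t}\Big)\Big)=\frac{c^2}{4d_\sigma^2n^2}\Big(\mathbb{E}([p_{t+1}]_1^4)-\mathbb{E}([p_{t+1}]_1^2)^2+2(n-1)\Big).$$ Furthermore, $\mathbb{E}([p_{t+1}]_1^2)\to\mathbb{E}(\mathcal{N}_{1:\lambda}^2)+\frac{2-2c}{c}\mathbb{E}(\mathcal{N}_{1:\lambda})^2$ as $t\to\infty$, and with $a=1-c$, $$\lim_{t\to\infty}\mathbb{E}([p_t]_1^4)=\frac{(1-a^2)^2}{1-a^4}\big(k_4+k_{31}+k_{22}+k_{211}+k_{1111}\big),$$ where $k_4=\mathbb{E}(\mathcal{N}_{1:\lambda}^4)$, $k_{31}=4\frac{a(1+a+2a^2)}{1-a^3}\mathbb{E}(\mathcal{N}_{1:\lambda}^3)\mathbb{E}(\mathcal{N}_{1:\lambda})$, $k_{22}=6\frac{a^2}{1-a^2}\mathbb{E}(\mathcal{N}_{1:\lambda}^2)^2$, $k_{211}=12\frac{a^3(1+2a+3a^2)}{(1-a^2)(1-a^3)}\mathbb{E}(\mathcal{N}_{1:\lambda}^2)\mathbb{E}(\mathcal{N}_{1:\lambda})^2$ and $k_{1111}=24\frac{a^6}{(1-a)(1-a^2)(1-a^3)}\mathbb{E}(\mathcal{N}_{1:\lambda})^4$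.
   Context: For $x\in\mathbb{R}^n$, $[x]_i$ denotes its $i$-th coordinate. The $(1,\lambda)$-CSA-ES with parameters $\lambda\ge1$, $0<c\le1$, $d_\sigma>0$, minimizing $f:\mathbb{R}^n\to\mathbb{R}$, is defined as follows. Start from $X_0\in\mathbb{R}^n$, $\sigma_0>0$, and $p_0\sim\mathcal{N}(0,I_n)$. At iteration $t$, draw $\xi_{t,1},\ldots,\xi_{t,\lambda}$ i.i.d. $\sim\mathcal{N}(0,I_n)$, independent of everything before; the children are $Y_{t,i}=X_t+\sigma_t\xi_{t,i}$. The next parent $X_{t+1}$ is the child with the smallest $f$-value, and $\xi^\star_t$ denotes the corresponding $\xi_{t,i}$, so that $X_{t+1}=X_t+\sigma_t\xi^\star_t$. The cumulative path is $p_{t+1}=(1-c)p_t+\sqrt{c(2-c)}\,\xi^\star_t$, and the step-size is updated as $\sigma_{t+1}=\sigma_t\exp\!\big(\tfrac{c}{2d_\sigma}(\|p_{t+1}\|^2/n-1)\big)$. For i.i.d. standard normal $\mathcal{N}_1,\ldots,\mathcal{N}_\lambda$, $\mathcal{N}_{1:\lambda}$ denotes their minimum; $\mathbb{E}(Y)^k$ denotes the $k$-th power of the expectation of $Y$. *)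

theory Defs
  imports "HOL-Probability.Probability"
begin

text \<open>Vectors of R^n are represented as functions nat => real; only coordinates
  0..n-1 are meaningful, coordinate 0 plays the role of [x]_1.\<close>

definition argmin_idx :: "nat \<Rightarrow> (nat \<Rightarrow> real) \<Rightarrow> nat" where
  "argmin_idx lam g = (LEAST i. i < lam \<and> (\<forall>j<lam. g i \<le> g j))"

text \<open>One sample path of the (1,lambda)-CSA-ES: state (X_t, sigma_t, p_t),
  driven by the samples xi t i (a vector) for iteration t and child i.\<close>
fun csa_state ::
  "((nat \<Rightarrow> real) \<Rightarrow> real) \<Rightarrow> nat \<Rightarrow> nat \<Rightarrow> real \<Rightarrow> real \<Rightarrow>
   (nat \<Rightarrow> real) \<Rightarrow> real \<Rightarrow> (nat \<Rightarrow> real) \<Rightarrow> (nat \<Rightarrow> nat \<Rightarrow> nat \<Rightarrow> real) \<Rightarrow> nat \<Rightarrow>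
   (nat \<Rightarrow> real) \<times> real \<times> (nat \<Rightarrow> real)" where
  "csa_state f n lam c d X0 s0 p0 xi 0 = (X0, s0, p0)"
| "csa_state f n lam c d X0 s0 p0 xi (Suc t) =
    (let (X, s, p) = csa_state f n lam c d X0 s0 p0 xi t;
         i = argmin_idx lam (\<lambda>i. f (\<lambda>k. X k + s * xi t i k));
         xs = xi t i;
         p' = (\<lambda>k. (1 - c) * p k + sqrt (c * (2 - c)) * xs k);
         s' = s * exp (c / (2 * d) * ((\<Sum>k<n. (p' k)\<^sup>2) / real n - 1));
         X' = (\<lambda>k. X k + s * xs k)
     in (X', s', p'))"

definition Emin :: "nat \<Rightarrow> nat \<Rightarrow> real" where
  "Emin lam k = integral\<^sup>L (PiM {..<lam} (\<lambda>_. density lborel std_normal_density))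
                   (\<lambda>x. (Min (x ` {..<lam})) ^ k)"

end

theory Submission
  imports Defs
begin

definition "a_of c = 1 - (c::real)"

lemma argmin_idx_affine:
  assumes "s > 0"
  shows "argmin_idx lam (\<lambda>i. x + s * g i) = argmin_idx lam g"
  unfolding argmin_idx_def using assms by simp

lemma argmin_idx_lt: "lam \<ge> 1 \<Longrightarrow> argmin_idx lam g < lam"
proof -
  assume "lam \<ge> 1"
  have fin: "finite (g ` {..<lam})" "g ` {..<lam} \<noteq> {}" using \<open>lam\<ge>1\<close> by (auto simp: lessThan_empty_iff)
  obtain i where i: "i < lam" "g i = Min (g ` {..<lam})"
    using Min_in[OF fin] by auto
  have "i < lam \<and> (\<forall>j<lam. g i \<le> g j)" using i fin by auto
  then show ?thesis unfolding argmin_idx_def by (rule LeastI2) auto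
qed

lemma argmin_idx_min: "lam \<ge> 1 \<Longrightarrow> g (argmin_idx lam g) = Min (g ` {..<lam})"
proof -
  assume "lam \<ge> 1"
  have fin: "finite (g ` {..<lam})" "g ` {..<lam} \<noteq> {}" using \<open>lam\<ge>1\<close> by (auto simp: lessThan_empty_iff)
  obtain i where i: "i < lam" "g i = Min (g ` {..<lam})"
    using Min_in[OF fin] by auto
  have "i < lam \<and> (\<forall>j<lam. g i \<le> g j)" using i fin by auto
  then have "argmin_idx lam g < lam \<and> (\<forall>j<lam. g (argmin_idx lam g) \<le> g j)"
    unfolding argmin_idx_def by (rule LeastI)
  then show ?thesis using fin by (intro antisym) auto
qed


lemma pow_bound4:
  fixes x y z w :: real
  assumes "e1 + e2 + e3 + e4 \<le> 4"
  shows "\<bar>x^e1 * y^e2 * z^e3 * w^e4\<bar> \<le> 1 + x^4 + y^4 + z^4 + w^4"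
proof -
  define m where "m = max (max \<bar>x\<bar> \<bar>y\<bar>) (max \<bar>z\<bar> \<bar>w\<bar>)"
  have m0: "0 \<le> m" by (simp add: m_def)
  have "\<bar>x^e1 * y^e2 * z^e3 * w^e4\<bar> = \<bar>x\<bar>^e1 * \<bar>y\<bar>^e2 * \<bar>z\<bar>^e3 * \<bar>w\<bar>^e4"
    by (simp add: abs_mult power_abs)
  also have "\<dots> \<le> m^e1 * m^e2 * m^e3 * m^e4"
    by (intro mult_mono power_mono) (auto simp: m_def le_max_iff_disj)
  also have "\<dots> = m^(e1+e2+e3+e4)" by (simp add: power_add)
  also have "\<dots> \<le> 1 + m^4"
  proof (cases "m \<le> 1")
    case True
    then have "m^(e1+e2+e3+e4) \<le> 1" using m0 by (simp add: power_le_one)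
    then show ?thesis using m0 by (smt (verit) zero_le_power)
  next
    case False
    then have "m^(e1+e2+e3+e4) \<le> m^4" using assms by (intro power_increasing) auto
    then show ?thesis by simp
  qed
  also have "m^4 \<le> x^4 + y^4 + z^4 + w^4"
  proof -
    have "m^4 = x^4 \<or> m^4 = y^4 \<or> m^4 = z^4 \<or> m^4 = w^4"
      unfolding m_def by (auto simp: max_def power_even_abs_numeral)
    moreover have "0 \<le> x^4" "0 \<le> y^4" "0 \<le> z^4" "0 \<le> w^4" by auto
    ultimately show ?thesis by linarith
  qed
  finally show ?thesis by simp
qed


lemma sum_atMost4: "(\<Sum>v\<le>(4::nat). f v) = f 0 + f 1 + f 2 + f 3 + (f 4 :: real)"
  by (simp add: eval_nat_numeral atMost_Suc add_ac)
lemma sum_atMost3: "(\<Sum>v\<le>(3::nat). f v) = f 0 + f 1 + f 2 + (f 3 :: real)"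
  by (simp add: eval_nat_numeral atMost_Suc add_ac)
lemma sum_atMost2: "(\<Sum>v\<le>(2::nat). f v) = f 0 + f 1 + (f 2 :: real)"
  by (simp add: eval_nat_numeral atMost_Suc add_ac)
lemma sum_atMost1: "(\<Sum>v\<le>(1::nat). f v) = f 0 + (f 1 :: real)"
  by (simp add: eval_nat_numeral atMost_Suc add_ac)

lemma lin_rec_lim:
  fixes x g :: "nat \<Rightarrow> real"
  assumes r: "\<bar>r\<bar> < 1" and rec: "\<And>t. x (Suc t) = r * x t + g t" and g: "g \<longlonglongrightarrow> G"
  shows "x \<longlonglongrightarrow> G / (1 - r)"
proof -
  define y where "y t = x t - G / (1 - r)" for t
  define h where "h t = g t - G" for t
  have r1: "1 - r \<noteq> 0" using r by auto
  have k: "G / (1 - r) = r * (G / (1 - r)) + G"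
  proof -
    have "G / (1 - r) - r * (G / (1 - r)) = (1 - r) * (G / (1 - r))" by (simp only: left_diff_distrib mult_1)
    also have "\<dots> = G" using r1 by simp
    finally show ?thesis by linarith
  qed
  have yrec: "y (Suc t) = r * y t + h t" for t
  proof -
    have "r * (x t - G / (1 - r)) = r * x t - r * (G / (1 - r))" by (simp add: right_diff_distrib)
    then show ?thesis unfolding y_def h_def rec using k by linarith
  qed
  have h0: "h \<longlonglongrightarrow> 0" using g unfolding h_def by (intro tendsto_eq_intros) auto
  have "y \<longlonglongrightarrow> 0"
  proof (rule LIMSEQ_I)
    fix e :: real assume e: "0 < e"
    define \<delta> where "\<delta> = e * (1 - \<bar>r\<bar>) / 2"
    have d: "0 < \<delta>" unfolding \<delta>_def using e r by (intro divide_pos_pos mult_pos_pos) auto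
    obtain N where N: "\<And>t. t \<ge> N \<Longrightarrow> norm (h t - 0) < \<delta>" using LIMSEQ_D[OF h0 d] by blast
    have bnd: "\<bar>y (N + m)\<bar> \<le> \<bar>r\<bar> ^ m * \<bar>y N\<bar> + \<delta> / (1 - \<bar>r\<bar>)" for m
    proof (induction m)
      case 0 then show ?case using d r by simp
    next
      case (Suc m)
      have "\<bar>y (N + Suc m)\<bar> = \<bar>r * y (N + m) + h (N + m)\<bar>" by (simp add: yrec)
      also have "\<dots> \<le> \<bar>r\<bar> * \<bar>y (N + m)\<bar> + \<delta>"
      proof -
        have "\<bar>h (N + m)\<bar> < \<delta>" using N[of "N + m"] by simp
        moreover have "\<bar>r * y (N + m) + h (N + m)\<bar> \<le> \<bar>r\<bar> * \<bar>y (N + m)\<bar> + \<bar>h (N + m)\<bar>"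
          using abs_triangle_ineq[of "r * y (N + m)" "h (N + m)"] by (simp add: abs_mult)
        ultimately show ?thesis by linarith
      qed
      also have "\<dots> \<le> \<bar>r\<bar> * (\<bar>r\<bar> ^ m * \<bar>y N\<bar> + \<delta> / (1 - \<bar>r\<bar>)) + \<delta>"
        using Suc.IH by (simp add: mult_left_mono)
      also have "\<dots> = \<bar>r\<bar> ^ Suc m * \<bar>y N\<bar> + (\<bar>r\<bar> * (\<delta> / (1 - \<bar>r\<bar>)) + \<delta>)"
        by (simp add: algebra_simps)
      also have "\<bar>r\<bar> * (\<delta> / (1 - \<bar>r\<bar>)) + \<delta> = \<delta> / (1 - \<bar>r\<bar>)"
      proof -
        have "q < 1 \<Longrightarrow> q * (\<delta> / (1 - q)) + \<delta> = \<delta> / (1 - q)" for q :: real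
          by (simp add: divide_simps) (simp add: algebra_simps)
        then show ?thesis using r by blast
      qed
      finally show ?case .
    qed
    have "(\<lambda>m. \<bar>r\<bar> ^ m * \<bar>y N\<bar>) \<longlonglongrightarrow> 0"
      using r by (intro tendsto_mult_left_zero LIMSEQ_power_zero) auto
    from LIMSEQ_D[OF this, of "e/2"] e obtain M0 where M0: "\<And>m. m \<ge> M0 \<Longrightarrow> norm (\<bar>r\<bar> ^ m * \<bar>y N\<bar> - 0) < e / 2"
      by auto
    show "\<exists>no. \<forall>t\<ge>no. norm (y t - 0) < e"
    proof (intro exI allI impI)
      fix t assume t: "t \<ge> N + M0"
      define m where "m = t - N"
      have m: "t = N + m" "m \<ge> M0" using t unfolding m_def by auto
      have "q < 1 \<Longrightarrow> e * (1 - q) / 2 / (1 - q) = e / 2" for q :: real by (simp add: field_simps)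
      then have "\<delta> / (1 - \<bar>r\<bar>) = e / 2" using r unfolding \<delta>_def by blast
      moreover have "\<bar>r\<bar> ^ m * \<bar>y N\<bar> < e / 2" using M0[OF m(2)] by simp
      ultimately show "norm (y t - 0) < e" using bnd[of m] unfolding m(1) by simp
    qed
  qed
  then have "(\<lambda>t. y t + G / (1 - r)) \<longlonglongrightarrow> 0 + G / (1 - r)" by (intro tendsto_intros)
  then show ?thesis by (simp add: y_def)
qed


lemma alg:
  fixes a b m1 m2 m3 m4 :: real
  assumes a0: "0 \<le> a" and a1: "a < 1" and b: "b\<^sup>2 = 1 - a\<^sup>2"
  assumes L1_def: "L1 = b * m1 / (1 - a)"
  assumes L2_def: "L2 = (2 * a * b * L1 * m1 + b\<^sup>2 * m2) / (1 - a\<^sup>2)"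
  assumes L3_def: "L3 = (3 * a\<^sup>2 * b * L2 * m1 + 3 * a * b\<^sup>2 * L1 * m2 + b ^ 3 * m3) / (1 - a ^ 3)"
  assumes L4_def: "L4 = (4 * a ^ 3 * b * L3 * m1 + 6 * a\<^sup>2 * b\<^sup>2 * L2 * m2 + 4 * a * b ^ 3 * L1 * m3 + b ^ 4 * m4) / (1 - a ^ 4)"
  shows "L2 = m2 + (2 - 2 * (1 - a)) / (1 - a) * m1\<^sup>2"
    and "L4 = (1 - a\<^sup>2)\<^sup>2 / (1 - a ^ 4) *
              (m4
               + 4 * (a * (1 + a + 2 * a\<^sup>2) / (1 - a ^ 3)) * m3 * m1
               + 6 * (a\<^sup>2 / (1 - a\<^sup>2)) * (m2)\<^sup>2
               + 12 * (a ^ 3 * (1 + 2 * a + 3 * a\<^sup>2) / ((1 - a\<^sup>2) * (1 - a ^ 3)))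
                    * m2 * (m1)\<^sup>2
               + 24 * (a ^ 6 / ((1 - a) * (1 - a\<^sup>2) * (1 - a ^ 3))) * (m1) ^ 4)"
proof -
  have n1: "1 - a \<noteq> 0" using a1 by simp
  have pk: "a ^ k < 1" if "k > 0" for k :: nat using power_strict_mono[OF a1 a0 that] by simp
  have n2: "1 - a\<^sup>2 \<noteq> 0" using pk[of 2] by simp
  have n3: "1 - a ^ 3 \<noteq> 0" using pk[of 3] by simp
  have n4: "1 - a ^ 4 \<noteq> 0" using pk[of 4] by simp
  define i1 where "i1 = inverse (1 - a)"
  define i2 where "i2 = inverse (1 - a\<^sup>2)"
  define i3 where "i3 = inverse (1 - a ^ 3)"
  define i4 where "i4 = inverse (1 - a ^ 4)"
  have h1: "i1 * (1 - a) = 1" using n1 by (simp add: i1_def)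
  have h2: "i2 * (1 - a\<^sup>2) = 1" using n2 by (simp add: i2_def)
  have h3: "i3 * (1 - a ^ 3) = 1" using n3 by (simp add: i3_def)
  have h4: "i4 * (1 - a ^ 4) = 1" using n4 by (simp add: i4_def)
  show "L2 = m2 + (2 - 2 * (1 - a)) / (1 - a) * m1\<^sup>2"
    unfolding L2_def L1_def divide_inverse inverse_mult_distrib i1_def[symmetric] i2_def[symmetric]
    using h1 h2 b by algebra
  show "L4 = (1 - a\<^sup>2)\<^sup>2 / (1 - a ^ 4) *
              (m4
               + 4 * (a * (1 + a + 2 * a\<^sup>2) / (1 - a ^ 3)) * m3 * m1
               + 6 * (a\<^sup>2 / (1 - a\<^sup>2)) * (m2)\<^sup>2
               + 12 * (a ^ 3 * (1 + 2 * a + 3 * a\<^sup>2) / ((1 - a\<^sup>2) * (1 - a ^ 3)))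
                    * m2 * (m1)\<^sup>2
               + 24 * (a ^ 6 / ((1 - a) * (1 - a\<^sup>2) * (1 - a ^ 3))) * (m1) ^ 4)"
    unfolding L4_def L3_def L2_def L1_def divide_inverse inverse_mult_distrib
      i1_def[symmetric] i2_def[symmetric] i3_def[symmetric] i4_def[symmetric]
    using h1 h2 h3 h4 b by algebra
qed

locale csa = prob_space M for M :: "'a measure" +
  fixes n lam :: nat and c d s0 :: real
    and X0 :: "nat \<Rightarrow> real" and p0 :: "'a \<Rightarrow> nat \<Rightarrow> real"
    and xi :: "'a \<Rightarrow> nat \<Rightarrow> nat \<Rightarrow> nat \<Rightarrow> real"
  assumes n1: "n \<ge> 1" and lam1: "lam \<ge> 1" and c0: "0 < c" and c1: "c \<le> 1" and d0: "d > 0" and s0: "s0 > 0"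
    and indep: "indep_vars (\<lambda>_. borel)
        (\<lambda>j \<omega>. case j of Inl k \<Rightarrow> p0 \<omega> k | Inr (t, i, k) \<Rightarrow> xi \<omega> t i k)
        ({Inl k | k. k < n} \<union> {Inr (t, i, k) | t i k. i < lam \<and> k < n})"
    and p0_normal: "\<And>k. k < n \<Longrightarrow> distributed M lborel (\<lambda>\<omega>. p0 \<omega> k) std_normal_density"
    and xi_normal: "\<And>t i k. i < lam \<Longrightarrow> k < n \<Longrightarrow>
                      distributed M lborel (\<lambda>\<omega>. xi \<omega> t i k) std_normal_density"
begin

definition "Sg t \<omega> = fst (snd (csa_state (\<lambda>x. x 0) n lam c d X0 s0 (p0 \<omega>) (xi \<omega>) t))"
definition "P t \<omega> = snd (snd (csa_state (\<lambda>x. x 0) n lam c d X0 s0 (p0 \<omega>) (xi \<omega>) t))"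
definition "I t \<omega> = argmin_idx lam (\<lambda>i. xi \<omega> t i 0)"
definition "aa = 1 - c"
definition "bb = sqrt (c * (2 - c))"

lemma Sg_Suc_P_Suc:
  assumes "Sg t \<omega> > 0"
  shows "P (Suc t) \<omega> = (\<lambda>k. aa * P t \<omega> k + bb * xi \<omega> t (I t \<omega>) k)"
    and "Sg (Suc t) \<omega> = Sg t \<omega> * exp (c / (2 * d) * ((\<Sum>k<n. (P (Suc t) \<omega> k)\<^sup>2) / real n - 1))"
proof -
  obtain X s q where e: "csa_state (\<lambda>x. x 0) n lam c d X0 s0 (p0 \<omega>) (xi \<omega>) t = (X, s, q)"
    by (metis prod.exhaust)
  have s: "s > 0" using assms e by (simp add: Sg_def)
  have I: "argmin_idx lam (\<lambda>i. X 0 + s * xi \<omega> t i 0) = I t \<omega>"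
    using argmin_idx_affine[OF s] by (simp add: I_def)
  show "P (Suc t) \<omega> = (\<lambda>k. aa * P t \<omega> k + bb * xi \<omega> t (I t \<omega>) k)"
    using e I by (simp add: P_def Let_def aa_def bb_def)
  show "Sg (Suc t) \<omega> = Sg t \<omega> * exp (c / (2 * d) * ((\<Sum>k<n. (P (Suc t) \<omega> k)\<^sup>2) / real n - 1))"
    using e I by (simp add: P_def Sg_def Let_def aa_def bb_def)
qed

lemma Sg_pos: "Sg t \<omega> > 0"
proof (induction t)
  case 0 then show ?case using s0 by (simp add: Sg_def)
next
  case (Suc t) then show ?case using Sg_Suc_P_Suc(2)[OF Suc] by simp
qed

lemmas P_Suc = Sg_Suc_P_Suc(1)[OF Sg_pos]
lemmas Sg_Suc = Sg_Suc_P_Suc(2)[OF Sg_pos]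

lemma P_0: "P 0 \<omega> = p0 \<omega>" by (simp add: P_def)

lemma ln_ratio: "ln (Sg (Suc t) \<omega> / Sg t \<omega>) = c / (2 * d) * ((\<Sum>k<n. (P (Suc t) \<omega> k)\<^sup>2) / real n - 1)"
  using Sg_pos[of t \<omega>] by (simp add: Sg_Suc)

abbreviation "Xb \<equiv> (\<lambda>j \<omega>. case j of Inl k \<Rightarrow> p0 \<omega> k | Inr (t, i, k) \<Rightarrow> xi \<omega> t i k)"
abbreviation "Jb \<equiv> ({Inl k | k. k < n} \<union> {Inr (t, i, k) | t i k. i < lam \<and> k < n})"

definition "Gs A = (\<Union>j\<in>A. {Xb j -` S \<inter> space M | S. S \<in> sets (borel::real measure)})"
definition "gen A = sigma (space M) (Gs A)"

lemma Gs_pow: "Gs A \<subseteq> Pow (space M)" by (auto simp: Gs_def)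
lemma space_gen[simp]: "space (gen A) = space M" using Gs_pow by (simp add: gen_def space_measure_of_conv)
lemma sets_gen: "sets (gen A) = sigma_sets (space M) (Gs A)" using Gs_pow by (simp add: gen_def)

lemma gen_X: "j \<in> A \<Longrightarrow> Xb j \<in> borel_measurable (gen A)"
  by (rule measurableI) (auto simp: sets_gen Gs_def)

lemma gen_xi: "Inr (t, i, k) \<in> A \<Longrightarrow> (\<lambda>\<omega>. xi \<omega> t i k) \<in> borel_measurable (gen A)"
  using gen_X[of "Inr (t, i, k)" A] by simp
lemma gen_p0: "Inl k \<in> A \<Longrightarrow> (\<lambda>\<omega>. p0 \<omega> k) \<in> borel_measurable (gen A)"
  using gen_X[of "Inl k" A] by simp

lemma rv_X: "j \<in> Jb \<Longrightarrow> Xb j \<in> borel_measurable M"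
  using indep unfolding indep_vars_def2 by blast

lemma gen_sub: "A \<subseteq> Jb \<Longrightarrow> sets (gen A) \<subseteq> sets M"
  unfolding sets_gen
  by (rule sets.sigma_sets_subset) (auto simp: Gs_def intro!: measurable_sets rv_X)

lemma gen_M: "A \<subseteq> Jb \<Longrightarrow> f \<in> borel_measurable (gen A) \<Longrightarrow> f \<in> borel_measurable M"
  by (rule borel_measurable_subalgebra[OF gen_sub]) auto

lemma gen_mono: "A \<subseteq> B \<Longrightarrow> f \<in> measurable (gen A) N \<Longrightarrow> f \<in> measurable (gen B) N"
proof -
  assume "A \<subseteq> B" "f \<in> measurable (gen A) N"
  moreover have "sets (gen A) \<subseteq> sets (gen B)"
    unfolding sets_gen by (rule sigma_sets_subseteq) (use \<open>A \<subseteq> B\<close> in \<open>auto simp: Gs_def\<close>)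
  ultimately show ?thesis unfolding measurable_def by auto
qed

lemma indep_gen:
  fixes Y Z :: "'a \<Rightarrow> real"
  assumes AB: "A \<subseteq> Jb" "B \<subseteq> Jb" "A \<inter> B = {}"
    and Y: "Y \<in> borel_measurable (gen A)" and Z: "Z \<in> borel_measurable (gen B)"
    and iY: "integrable M Y" and iZ: "integrable M Z"
  shows "(\<integral>\<omega>. Y \<omega> * Z \<omega> \<partial>M) = (\<integral>\<omega>. Y \<omega> \<partial>M) * (\<integral>\<omega>. Z \<omega> \<partial>M)"
    and "integrable M (\<lambda>\<omega>. Y \<omega> * Z \<omega>)"
proof -
  let ?E = "\<lambda>j. {Xb j -` S \<inter> space M | S. S \<in> sets (borel::real measure)}"
  let ?I = "\<lambda>b::bool. if b then A else B"
  have ind0: "indep_sets ?E Jb" using indep unfolding indep_vars_def2 by blast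
  have "indep_sets ?E (\<Union>b\<in>UNIV. ?I b)"
    by (rule indep_sets_mono_index[OF _ ind0]) (use AB in auto)
  then have "indep_sets (\<lambda>b. sigma_sets (space M) (\<Union>i\<in>?I b. ?E i)) UNIV"
  proof (rule indep_sets_collect_sigma)
    show "Int_stable (?E i)" for i
      unfolding Int_stable_def
      apply clarify subgoal for a b S T by (rule exI[of _ "S \<inter> T"]) auto done
    show "disjoint_family_on ?I UNIV" using AB by (auto simp: disjoint_family_on_def)
  qed
  moreover have "(\<lambda>b. sigma_sets (space M) (\<Union>i\<in>?I b. ?E i)) =
       case_bool (sets (gen A)) (sets (gen B))"
    by (rule ext) (simp add: sets_gen Gs_def split: bool.split)
  ultimately have ind: "indep_set (sets (gen A)) (sets (gen B))"
    unfolding indep_set_def by simp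
  have YM: "Y \<in> borel_measurable M" using gen_M[OF AB(1) Y] .
  have ZM: "Z \<in> borel_measurable M" using gen_M[OF AB(2) Z] .
  have "indep_var borel Y borel Z"
    unfolding indep_var_eq
  proof (intro conjI YM ZM)
    have s1: "sigma_sets (space M) {Y -` S \<inter> space M |S. S \<in> sets borel} \<subseteq> sets (gen A)"
      unfolding sets_gen by (rule sigma_sets_mono) (use measurable_sets[OF Y] in \<open>auto simp: sets_gen[symmetric]\<close>)
    have s2: "sigma_sets (space M) {Z -` S \<inter> space M |S. S \<in> sets borel} \<subseteq> sets (gen B)"
      unfolding sets_gen by (rule sigma_sets_mono) (use measurable_sets[OF Z] in \<open>auto simp: sets_gen[symmetric]\<close>)
    show "indep_set (sigma_sets (space M) {Y -` S \<inter> space M |S. S \<in> sets borel})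
                    (sigma_sets (space M) {Z -` S \<inter> space M |S. S \<in> sets borel})"
      using ind unfolding indep_set_def
      by (rule indep_sets_mono_sets) (use s1 s2 in \<open>auto split: bool.split\<close>)
  qed
  then show "(\<integral>\<omega>. Y \<omega> * Z \<omega> \<partial>M) = (\<integral>\<omega>. Y \<omega> \<partial>M) * (\<integral>\<omega>. Z \<omega> \<partial>M)"
    and "integrable M (\<lambda>\<omega>. Y \<omega> * Z \<omega>)"
    using indep_var_lebesgue_integral indep_var_integrable iY iZ by blast+
qed

lemma int_le:
  fixes f g :: "'a \<Rightarrow> real"
  assumes "integrable M g" "f \<in> borel_measurable M" "\<And>\<omega>. \<omega> \<in> space M \<Longrightarrow> \<bar>f \<omega>\<bar> \<le> g \<omega>"
  shows "integrable M f"
  by (rule Bochner_Integration.integrable_bound[OF assms(1,2)]) (auto intro!: AE_I2 dest: assms(3) simp: abs_le_iff)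

lemma int_pow4:
  fixes f1 f2 f3 f4 :: "'a \<Rightarrow> real"
  assumes m: "f1 \<in> borel_measurable M" "f2 \<in> borel_measurable M" "f3 \<in> borel_measurable M" "f4 \<in> borel_measurable M"
    and i: "integrable M (\<lambda>\<omega>. f1 \<omega> ^ 4)" "integrable M (\<lambda>\<omega>. f2 \<omega> ^ 4)"
       "integrable M (\<lambda>\<omega>. f3 \<omega> ^ 4)" "integrable M (\<lambda>\<omega>. f4 \<omega> ^ 4)"
    and e: "e1 + e2 + e3 + e4 \<le> 4"
  shows "integrable M (\<lambda>\<omega>. f1 \<omega> ^ e1 * f2 \<omega> ^ e2 * f3 \<omega> ^ e3 * f4 \<omega> ^ e4)"
  by (rule int_le[where g="\<lambda>\<omega>. 1 + f1 \<omega> ^ 4 + f2 \<omega> ^ 4 + f3 \<omega> ^ 4 + f4 \<omega> ^ 4"])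
     (use m i pow_bound4[OF e] in auto)

definition "Blk (t::nat) = {Inr (t, i, k) | i k. i < lam \<and> k < n}"
definition "Past (t::nat) = {Inl k | k. k < n} \<union> {Inr (s, i, k) | s i k. s < t \<and> i < lam \<and> k < n}"
definition "W t k \<omega> = xi \<omega> t (I t \<omega>) k"

lemma Blk_sub: "Blk t \<subseteq> Jb" by (auto simp: Blk_def)
lemma Past_sub: "Past t \<subseteq> Jb" by (auto simp: Past_def)
lemma Past_Blk_disj: "Past t \<inter> Blk t = {}" unfolding Past_def Blk_def by blast
lemma Past_mono: "Past t \<subseteq> Past (Suc t)" by (auto simp: Past_def)
lemma Blk_Past: "Blk t \<subseteq> Past (Suc t)" by (auto simp: Past_def Blk_def)

lemma I_lt: "I t \<omega> < lam" using argmin_idx_lt[OF lam1] by (simp add: I_def)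

lemma I_meas:
  assumes h: "\<And>i. i < lam \<Longrightarrow> Inr (t, i, 0) \<in> A"
  shows "I t \<in> measurable (gen A) (count_space UNIV)"
proof -
  have "(\<lambda>\<omega>. i < lam \<and> (\<forall>j<lam. xi \<omega> t i 0 \<le> xi \<omega> t j 0)) \<in> measurable (gen A) (count_space UNIV)" for i
  proof (cases "i < lam")
    case True
    have eq: "(\<lambda>\<omega>. i < lam \<and> (\<forall>j<lam. xi \<omega> t i 0 \<le> xi \<omega> t j 0)) =
              (\<lambda>\<omega>. \<forall>j\<in>{..<lam}. xi \<omega> t i 0 \<le> xi \<omega> t j 0)" using True by auto
    have [measurable]: "(\<lambda>\<omega>. xi \<omega> t i 0) \<in> borel_measurable (gen A)" using h True gen_xi by blast
    show ?thesis unfolding eq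
    proof (rule pred_intros_finite(3))
      fix j assume "j \<in> {..<lam}"
      then have [measurable]: "(\<lambda>\<omega>. xi \<omega> t j 0) \<in> borel_measurable (gen A)" using h gen_xi by blast
      show "Measurable.pred (gen A) (\<lambda>\<omega>. xi \<omega> t i 0 \<le> xi \<omega> t j 0)" by measurable
    qed simp
  next
    case False then show ?thesis by simp
  qed
  then show ?thesis unfolding I_def argmin_idx_def by (rule measurable_Least)
qed

lemma W_sum: "W t k \<omega> ^ u = (\<Sum>i<lam. if i = I t \<omega> then xi \<omega> t i k ^ u else 0)"
  using I_lt[of t \<omega>] by (simp add: W_def)

lemma W_meas:
  assumes h: "\<And>i. i < lam \<Longrightarrow> Inr (t, i, 0) \<in> A" "\<And>i. i < lam \<Longrightarrow> Inr (t, i, k) \<in> A"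
  shows "W t k \<in> borel_measurable (gen A)"
proof -
  have [measurable]: "I t \<in> measurable (gen A) (count_space UNIV)" using I_meas h by blast
  have eq: "W t k = (\<lambda>\<omega>. \<Sum>i\<in>{..<lam}. if i = I t \<omega> then xi \<omega> t i k else 0)"
    using W_sum[where u=1] by (intro ext) simp
  show ?thesis unfolding eq
  proof (rule borel_measurable_sum)
    fix i assume "i \<in> {..<lam}"
    then have [measurable]: "(\<lambda>\<omega>. xi \<omega> t i k) \<in> borel_measurable (gen A)" using h gen_xi by blast
    show "(\<lambda>\<omega>. if i = I t \<omega> then xi \<omega> t i k else 0) \<in> borel_measurable (gen A)" by measurable
  qed
qed

lemma W_meas_Blk: "k < n \<Longrightarrow> W t k \<in> borel_measurable (gen (Blk t))"
  using n1 by (intro W_meas) (auto simp: Blk_def)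

lemma P_Suc_k: "P (Suc t) \<omega> k = aa * P t \<omega> k + bb * W t k \<omega>"
  by (simp add: P_Suc W_def)

lemma P_meas: "k < n \<Longrightarrow> (\<lambda>\<omega>. P t \<omega> k) \<in> borel_measurable (gen (Past t))"
proof (induction t arbitrary: k)
  case 0
  have "Inl k \<in> Past 0" using 0 by (auto simp: Past_def)
  then show ?case using gen_p0[of k "Past 0"] by (simp add: P_0)
next
  case (Suc t)
  have [measurable]: "(\<lambda>\<omega>. P t \<omega> k) \<in> borel_measurable (gen (Past (Suc t)))"
    using gen_mono[OF Past_mono Suc.IH[OF Suc.prems]] .
  have [measurable]: "W t k \<in> borel_measurable (gen (Past (Suc t)))"
    using gen_mono[OF Blk_Past W_meas_Blk[OF Suc.prems]] .
  show ?case unfolding P_Suc_k by measurable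
qed

lemma P_measM: "k < n \<Longrightarrow> (\<lambda>\<omega>. P t \<omega> k) \<in> borel_measurable M"
  using gen_M[OF Past_sub P_meas] .
lemma W_measM: "k < n \<Longrightarrow> W t k \<in> borel_measurable M"
  using gen_M[OF Blk_sub W_meas_Blk] .
lemma xi_measM: "i < lam \<Longrightarrow> k < n \<Longrightarrow> (\<lambda>\<omega>. xi \<omega> t i k) \<in> borel_measurable M"
  using rv_X[of "Inr (t, i, k)"] by simp
lemma p0_measM: "k < n \<Longrightarrow> (\<lambda>\<omega>. p0 \<omega> k) \<in> borel_measurable M"
  using rv_X[of "Inl k"] by simp

definition "nm u = integral\<^sup>L lborel (\<lambda>x. std_normal_density x * x ^ u)"

lemma normal_mom:
  assumes "distributed M lborel X std_normal_density"
  shows "integrable M (\<lambda>\<omega>. X \<omega> ^ u)" "(\<integral>\<omega>. X \<omega> ^ u \<partial>M) = nm u"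
proof -
  show "integrable M (\<lambda>\<omega>. X \<omega> ^ u)"
    using distributed_integrable[OF assms, of "\<lambda>x. x ^ u"] integrable_std_normal_moment[of u] by simp
  show "(\<integral>\<omega>. X \<omega> ^ u \<partial>M) = nm u"
    using distributed_integral[OF assms, of "\<lambda>x. x ^ u"] by (simp add: nm_def)
qed

lemma nm_vals: "nm 0 = 1" "nm 1 = 0" "nm 2 = 1" "nm 3 = 0" "nm 4 = 3"
proof -
  show "nm 0 = 1" using integral_std_normal_moment_even[of 0] by (simp add: nm_def)
  show "nm 1 = 0" using integral_std_normal_moment_odd[of 0] by (simp add: nm_def)
  show "nm 2 = 1" using integral_std_normal_moment_even[of 1] by (simp add: nm_def)
  show "nm 3 = 0" using integral_std_normal_moment_odd[of 1] by (simp add: nm_def)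
  show "nm 4 = 3" using integral_std_normal_moment_even[of 2] by (simp add: nm_def fact_numeral)
qed

lemma xi_int: "i < lam \<Longrightarrow> k < n \<Longrightarrow> integrable M (\<lambda>\<omega>. xi \<omega> t i k ^ u)"
  using normal_mom(1)[OF xi_normal] .
lemma p0_int: "k < n \<Longrightarrow> integrable M (\<lambda>\<omega>. p0 \<omega> k ^ u)"
  using normal_mom(1)[OF p0_normal] .

lemma W_int: "k < n \<Longrightarrow> integrable M (\<lambda>\<omega>. W t k \<omega> ^ u)"
proof (rule int_le[where g="\<lambda>\<omega>. \<Sum>i<lam. \<bar>xi \<omega> t i k ^ u\<bar>"])
  assume k: "k < n"
  show "integrable M (\<lambda>\<omega>. \<Sum>i<lam. \<bar>xi \<omega> t i k ^ u\<bar>)" using xi_int k by auto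
  show "(\<lambda>\<omega>. W t k \<omega> ^ u) \<in> borel_measurable M" using W_measM[OF k] by measurable
  fix \<omega>
  have "\<bar>W t k \<omega> ^ u\<bar> = \<bar>xi \<omega> t (I t \<omega>) k ^ u\<bar>" by (simp add: W_def)
  also have "\<dots> \<le> (\<Sum>i<lam. \<bar>xi \<omega> t i k ^ u\<bar>)"
    by (rule member_le_sum[of "I t \<omega>" "{..<lam}" "\<lambda>i. \<bar>xi \<omega> t i k ^ u\<bar>"]) (auto simp: I_lt)
  finally show "\<bar>W t k \<omega> ^ u\<bar> \<le> (\<Sum>i<lam. \<bar>xi \<omega> t i k ^ u\<bar>)" .
qed

lemmas W_int4 = W_int[where u=4]

lemma P_int4: "k < n \<Longrightarrow> integrable M (\<lambda>\<omega>. P t \<omega> k ^ 4)"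
proof (induction t)
  case 0 then show ?case using p0_int by (simp add: P_0)
next
  case (Suc t)
  have "integrable M (\<lambda>\<omega>. 8 * (aa ^ 4 * P t \<omega> k ^ 4) + 8 * (bb ^ 4 * W t k \<omega> ^ 4))"
    using Suc W_int4 by auto
  then show ?case
  proof (rule int_le)
    show "(\<lambda>\<omega>. P (Suc t) \<omega> k ^ 4) \<in> borel_measurable M" using P_measM[OF Suc.prems] by measurable
    fix \<omega>
    have "\<bar>P (Suc t) \<omega> k ^ 4\<bar> = (aa * P t \<omega> k + bb * W t k \<omega>) ^ 4" by (simp add: P_Suc_k)
    also have "\<dots> \<le> 8 * (aa * P t \<omega> k) ^ 4 + 8 * (bb * W t k \<omega>) ^ 4"
    proof -
      have "(x + y) ^ 4 \<le> 8 * x ^ 4 + 8 * y ^ 4" for x y :: real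
      proof -
        have "0 \<le> (x - y)^2" "0 \<le> (x^2 - y^2)^2" by simp_all
        then have h1: "(x+y)^2 \<le> 2*(x^2+y^2)" and h2: "(x^2+y^2)^2 \<le> 2*(x^4+y^4)"
          by (simp_all add: power2_eq_square algebra_simps power4_eq_xxxx)
        have "(x+y)^4 = ((x+y)^2)^2" by simp
        also have "\<dots> \<le> (2*(x^2+y^2))^2" by (rule power_mono[OF h1]) simp
        also have "\<dots> = 4 * (x^2+y^2)^2" by (simp add: power2_eq_square algebra_simps)
        finally show ?thesis using h2 by simp
      qed
      then show ?thesis .
    qed
    finally show "\<bar>P (Suc t) \<omega> k ^ 4\<bar> \<le> 8 * (aa ^ 4 * P t \<omega> k ^ 4) + 8 * (bb ^ 4 * W t k \<omega> ^ 4)"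
      by (simp add: power_mult_distrib)
  qed
qed

lemma blk:
  assumes jk: "j < n" "k < n" "k \<noteq> 0" "j \<noteq> k"
  shows "(\<integral>\<omega>. W t j \<omega> ^ u * W t k \<omega> ^ v \<partial>M) = (\<integral>\<omega>. W t j \<omega> ^ u \<partial>M) * nm v"
proof -
  define Y where "Y i \<omega> = (if i = I t \<omega> then xi \<omega> t i j ^ u else 0)" for i \<omega>
  define Z where "Z i \<omega> = xi \<omega> t i k ^ v" for i \<omega>
  have eq: "W t j \<omega> ^ u * W t k \<omega> ^ v = (\<Sum>i\<in>{..<lam}. Y i \<omega> * Z i \<omega>)" for \<omega>
  proof -
    have "(\<Sum>i\<in>{..<lam}. Y i \<omega> * Z i \<omega>) = (\<Sum>i\<in>{..<lam}. if i = I t \<omega> then xi \<omega> t i j ^ u * xi \<omega> t i k ^ v else 0)"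
      by (intro sum.cong) (auto simp: Y_def Z_def)
    also have "\<dots> = xi \<omega> t (I t \<omega>) j ^ u * xi \<omega> t (I t \<omega>) k ^ v"
      using I_lt[of t \<omega>] by (subst sum.delta) auto
    finally show ?thesis by (simp add: W_def)
  qed
  have eqY: "W t j \<omega> ^ u = (\<Sum>i\<in>{..<lam}. Y i \<omega>)" for \<omega>
    using W_sum[of t j \<omega> u] by (simp add: Y_def)
  have main: "(\<integral>\<omega>. Y i \<omega> * Z i \<omega> \<partial>M) = (\<integral>\<omega>. Y i \<omega> \<partial>M) * nm v \<and> integrable M (\<lambda>\<omega>. Y i \<omega> * Z i \<omega>)
     \<and> integrable M (Y i)" if i: "i < lam" for i
  proof -
    define A where "A = ({Inr (t, i', 0) | i'. i' < lam} \<union> {Inr (t, i, j)} :: (nat + nat \<times> nat \<times> nat) set)"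
    define B where "B = ({Inr (t, i, k)} :: (nat + nat \<times> nat \<times> nat) set)"
    have AB: "A \<subseteq> Jb" "B \<subseteq> Jb" "A \<inter> B = {}" using jk i n1 by (auto simp: A_def B_def)
    have [measurable]: "I t \<in> measurable (gen A) (count_space UNIV)" by (rule I_meas) (auto simp: A_def)
    have [measurable]: "(\<lambda>\<omega>. xi \<omega> t i j) \<in> borel_measurable (gen A)" by (rule gen_xi) (auto simp: A_def)
    have [measurable]: "(\<lambda>\<omega>. xi \<omega> t i k) \<in> borel_measurable (gen B)" by (rule gen_xi) (auto simp: B_def)
    have mY: "Y i \<in> borel_measurable (gen A)" unfolding Y_def by measurable
    have mZ: "Z i \<in> borel_measurable (gen B)" unfolding Z_def by measurable
    have iY: "integrable M (Y i)"
      by (rule int_le[where g="\<lambda>\<omega>. \<bar>xi \<omega> t i j ^ u\<bar>"]) (use xi_int[OF i jk(1)] gen_M[OF AB(1) mY] in \<open>auto simp: Y_def\<close>)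
    have iZ: "integrable M (Z i)" unfolding Z_def using xi_int[OF i jk(2)] .
    have EZ: "(\<integral>\<omega>. Z i \<omega> \<partial>M) = nm v" unfolding Z_def using normal_mom(2)[OF xi_normal[OF i jk(2)]] .
    show ?thesis using indep_gen[OF AB mY mZ iY iZ] EZ iY by simp
  qed
  have "(\<integral>\<omega>. W t j \<omega> ^ u * W t k \<omega> ^ v \<partial>M) = (\<integral>\<omega>. (\<Sum>i\<in>{..<lam}. Y i \<omega> * Z i \<omega>) \<partial>M)"
    by (simp add: eq)
  also have "\<dots> = (\<Sum>i\<in>{..<lam}. (\<integral>\<omega>. Y i \<omega> * Z i \<omega> \<partial>M))"
    by (rule Bochner_Integration.integral_sum) (use main in auto)
  also have "\<dots> = (\<Sum>i\<in>{..<lam}. (\<integral>\<omega>. Y i \<omega> \<partial>M)) * nm v"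
    using main by (simp add: sum_distrib_right)
  also have "(\<Sum>i\<in>{..<lam}. (\<integral>\<omega>. Y i \<omega> \<partial>M)) = (\<integral>\<omega>. (\<Sum>i\<in>{..<lam}. Y i \<omega>) \<partial>M)"
    by (rule Bochner_Integration.integral_sum[symmetric]) (use main in auto)
  also have "\<dots> = (\<integral>\<omega>. W t j \<omega> ^ u \<partial>M)" by (simp add: eqY)
  finally show ?thesis .
qed

lemma W_mom: "k < n \<Longrightarrow> k \<noteq> 0 \<Longrightarrow> (\<integral>\<omega>. W t k \<omega> ^ v \<partial>M) = nm v"
proof -
  assume "k < n" "k \<noteq> 0"
  have "0 < n" using n1 by simp
  have "(\<integral>\<omega>. W t 0 \<omega> ^ 0 * W t k \<omega> ^ v \<partial>M) = (\<integral>\<omega>. W t 0 \<omega> ^ 0 \<partial>M) * nm v"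
    by (rule blk) (use \<open>0 < n\<close> \<open>k < n\<close> \<open>k \<noteq> 0\<close> in auto)
  moreover have "(\<integral>\<omega>. (1::real) \<partial>M) = 1" using prob_space by simp
  ultimately show ?thesis by simp
qed

lemma W0_mom: "(\<integral>\<omega>. W t 0 \<omega> ^ u \<partial>M) = Emin lam u"
proof -
  define D where "D = density lborel (std_normal_density :: real \<Rightarrow> real)"
  define f where "f i = (Inr (t, i, 0) :: nat + nat \<times> nat \<times> nat)" for i
  define K where "K = f ` {..<lam}"
  have sD: "sets D = sets borel" by (simp add: D_def)
  have pD: "prob_space D" unfolding D_def by (rule prob_space_normal_density) simp
  have K: "K \<subseteq> Jb" "K \<noteq> {}" using n1 lam1 by (auto simp: K_def f_def lessThan_empty_iff)
  have rv: "random_variable D (Xb j)" if "j \<in> K" for j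
  proof -
    have "j \<in> Jb" using K(1) that by blast
    then show ?thesis using rv_X[of j] by (simp add: measurable_cong_sets[OF refl sD])
  qed
  have "indep_vars (\<lambda>_. borel) Xb K" by (rule indep_vars_subset[OF indep K(1)])
  then have "indep_vars (\<lambda>_. D) Xb K"
    unfolding indep_vars_def2 by (simp add: sD measurable_cong_sets[OF refl sD])
  then have h3: "distr M (PiM K (\<lambda>_. D)) (\<lambda>\<omega>. \<lambda>j\<in>K. Xb j \<omega>) = PiM K (\<lambda>j. distr M D (Xb j))"
    using indep_vars_iff_distr_eq_PiM'[where I=K and M'="\<lambda>_. D" and X=Xb] K(2) rv by blast
  have h4: "distr M D (Xb j) = D" if "j \<in> K" for j
  proof -
    from that obtain i where i: "i < lam" "j = f i" by (auto simp: K_def)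
    have "distr M D (Xb j) = distr M lborel (\<lambda>\<omega>. xi \<omega> t i 0)"
      by (rule distr_cong) (auto simp: sD i f_def)
    also have "\<dots> = D" unfolding D_def using xi_normal[OF i(1)] n1
      by (simp add: distributed_distr_eq_density)
    finally show ?thesis .
  qed
  have h5: "distr M (PiM K (\<lambda>_. D)) (\<lambda>\<omega>. \<lambda>j\<in>K. Xb j \<omega>) = PiM K (\<lambda>_. D)"
    unfolding h3 by (rule PiM_cong) (auto simp: h4)
  have h6: "distr (PiM K (\<lambda>_. D)) (PiM {..<lam} (\<lambda>_. D)) (\<lambda>z. \<lambda>i\<in>{..<lam}. z (f i)) = PiM {..<lam} (\<lambda>_. D)"
    using distr_PiM_reindex[of K "\<lambda>_. D" f "{..<lam}"] pD
    by (auto simp: K_def f_def inj_on_def)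
  define G where "G z = Min (z ` {..<lam}) ^ u" for z :: "nat \<Rightarrow> real"
  have mG: "G \<in> borel_measurable (PiM {..<lam} (\<lambda>_. D))"
  proof -
    have [measurable]: "(\<lambda>z. z i) \<in> borel_measurable (PiM {..<lam} (\<lambda>_. D))" if "i \<in> {..<lam}" for i
      using measurable_component_singleton[OF that, of "\<lambda>_. D"] by (simp add: measurable_cong_sets[OF refl sD])
    have "(\<lambda>z. Min ((\<lambda>i. z i) ` {..<lam})) \<in> borel_measurable (PiM {..<lam} (\<lambda>_. D))"
      by (rule borel_measurable_Min) auto
    then show ?thesis unfolding G_def by measurable
  qed
  have mR: "(\<lambda>z. \<lambda>i\<in>{..<lam}. z (f i)) \<in> measurable (PiM K (\<lambda>_. D)) (PiM {..<lam} (\<lambda>_. D))"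
    by (intro measurable_restrict measurable_component_singleton) (auto simp: K_def)
  have mV: "(\<lambda>\<omega>. \<lambda>j\<in>K. Xb j \<omega>) \<in> measurable M (PiM K (\<lambda>_. D))"
    by (intro measurable_restrict) (use rv in auto)
  have "Emin lam u = integral\<^sup>L (PiM {..<lam} (\<lambda>_. D)) G"
    unfolding Emin_def D_def by (rule Bochner_Integration.integral_cong) (simp_all add: G_def)
  also have "\<dots> = integral\<^sup>L (PiM K (\<lambda>_. D)) (\<lambda>z. G (\<lambda>i\<in>{..<lam}. z (f i)))"
    by (subst h6[symmetric]) (rule integral_distr[OF mR mG])
  also have "\<dots> = (\<integral>\<omega>. G (\<lambda>i\<in>{..<lam}. (\<lambda>j\<in>K. Xb j \<omega>) (f i)) \<partial>M)"
    by (subst h5[symmetric]) (rule integral_distr[OF mV measurable_comp[OF mR mG, unfolded comp_def]])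
  also have "\<dots> = (\<integral>\<omega>. W t 0 \<omega> ^ u \<partial>M)"
  proof (rule Bochner_Integration.integral_cong[OF refl])
    fix \<omega>
    have "(\<lambda>i\<in>{..<lam}. (\<lambda>j\<in>K. Xb j \<omega>) (f i)) ` {..<lam} = (\<lambda>i. xi \<omega> t i 0) ` {..<lam}"
      by (auto simp: K_def f_def)
    then show "G (\<lambda>i\<in>{..<lam}. (\<lambda>j\<in>K. Xb j \<omega>) (f i)) = W t 0 \<omega> ^ u"
      using argmin_idx_min[OF lam1, of "\<lambda>i. xi \<omega> t i 0"] by (simp add: G_def W_def I_def)
  qed
  finally show ?thesis ..
qed

lemma ab1: "aa\<^sup>2 + bb\<^sup>2 = 1"
proof -
  have "0 \<le> c * (2 - c)" using c0 c1 by simp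
  then show ?thesis by (simp add: aa_def bb_def power2_eq_square algebra_simps)
qed

lemma binoms: "(4::nat) choose 1 = 4" "(4::nat) choose 2 = 6" "(4::nat) choose 3 = 4"
  "(3::nat) choose 1 = 3" "(3::nat) choose 2 = 3" "(2::nat) choose 1 = 2"
  by (simp_all add: eval_nat_numeral)

lemma nsum: "\<beta> \<le> 4 \<Longrightarrow>
  (\<Sum>v\<le>\<beta>. of_nat (\<beta> choose v) * aa ^ v * bb ^ (\<beta> - v) * nm v * nm (\<beta> - v)) = nm \<beta>"
proof -
  assume "\<beta> \<le> 4"
  then have "\<beta> = 0 \<or> \<beta> = 1 \<or> \<beta> = 2 \<or> \<beta> = 3 \<or> \<beta> = 4" by auto
  then show ?thesis
  proof (elim disjE)
    assume "\<beta> = 0" then show ?thesis by (simp add: nm_vals)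
  next
    assume "\<beta> = 1" then show ?thesis using nm_vals(2) by (simp add: sum_atMost1 nm_vals)
  next
    assume "\<beta> = 2" then show ?thesis using ab1 nm_vals(2)
      by (simp add: sum_atMost2 nm_vals binoms power2_eq_square)
  next
    assume "\<beta> = 3" then show ?thesis using nm_vals(2) by (simp add: sum_atMost3 nm_vals binoms)
  next
    assume b: "\<beta> = 4"
    have "(\<Sum>v\<le>\<beta>. of_nat (\<beta> choose v) * aa ^ v * bb ^ (\<beta> - v) * nm v * nm (\<beta> - v)) =
          3 * bb ^ 4 + 6 * aa ^ 2 * bb ^ 2 + 3 * aa ^ 4"
      by (simp add: b sum_atMost4 nm_vals binoms)
    also have "\<dots> = 3" using ab1 by algebra
    finally show ?thesis by (simp add: b nm_vals)
  qed
qed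

lemma int_pow2:
  fixes f g :: "'a \<Rightarrow> real"
  assumes "f \<in> borel_measurable M" "g \<in> borel_measurable M"
    "integrable M (\<lambda>\<omega>. f \<omega> ^ 4)" "integrable M (\<lambda>\<omega>. g \<omega> ^ 4)" "e1 + e2 \<le> 4"
  shows "integrable M (\<lambda>\<omega>. f \<omega> ^ e1 * g \<omega> ^ e2)"
  using int_pow4[OF assms(1,2) borel_measurable_const borel_measurable_const assms(3,4), of 1 1 e1 e2 0 0] assms(5)
  by simp

lemma expand:
  fixes P Q X Y :: "'a \<Rightarrow> real" and A B :: real
  assumes m: "P \<in> borel_measurable M" "Q \<in> borel_measurable M" "X \<in> borel_measurable M" "Y \<in> borel_measurable M"
    and i: "integrable M (\<lambda>\<omega>. P \<omega> ^ 4)" "integrable M (\<lambda>\<omega>. Q \<omega> ^ 4)"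
      "integrable M (\<lambda>\<omega>. X \<omega> ^ 4)" "integrable M (\<lambda>\<omega>. Y \<omega> ^ 4)"
    and ab: "\<alpha> + \<beta> \<le> 4"
    and fac: "\<And>u v. u \<le> \<alpha> \<Longrightarrow> v \<le> \<beta> \<Longrightarrow>
       (\<integral>\<omega>. (P \<omega> ^ u * Q \<omega> ^ v) * (X \<omega> ^ (\<alpha> - u) * Y \<omega> ^ (\<beta> - v)) \<partial>M) =
       (\<integral>\<omega>. P \<omega> ^ u * Q \<omega> ^ v \<partial>M) * (\<integral>\<omega>. X \<omega> ^ (\<alpha> - u) * Y \<omega> ^ (\<beta> - v) \<partial>M)"
  shows "(\<integral>\<omega>. (A * P \<omega> + B * X \<omega>) ^ \<alpha> * (A * Q \<omega> + B * Y \<omega>) ^ \<beta> \<partial>M) =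
    (\<Sum>u\<le>\<alpha>. \<Sum>v\<le>\<beta>. (of_nat (\<alpha> choose u) * of_nat (\<beta> choose v) * A ^ u * A ^ v * B ^ (\<alpha> - u) * B ^ (\<beta> - v))
        * (\<integral>\<omega>. P \<omega> ^ u * Q \<omega> ^ v \<partial>M) * (\<integral>\<omega>. X \<omega> ^ (\<alpha> - u) * Y \<omega> ^ (\<beta> - v) \<partial>M))"
proof -
  define cf where "cf u v = of_nat (\<alpha> choose u) * of_nat (\<beta> choose v) * A ^ u * A ^ v * B ^ (\<alpha> - u) * B ^ (\<beta> - v)" for u v
  define T where "T u v \<omega> = (P \<omega> ^ u * Q \<omega> ^ v) * (X \<omega> ^ (\<alpha> - u) * Y \<omega> ^ (\<beta> - v))" for u v \<omega>
  have pt: "(A * P \<omega> + B * X \<omega>) ^ \<alpha> * (A * Q \<omega> + B * Y \<omega>) ^ \<beta> = (\<Sum>u\<le>\<alpha>. \<Sum>v\<le>\<beta>. cf u v * T u v \<omega>)" for \<omega>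
  proof -
    have "(A * P \<omega> + B * X \<omega>) ^ \<alpha> * (A * Q \<omega> + B * Y \<omega>) ^ \<beta> =
       (\<Sum>u\<le>\<alpha>. of_nat (\<alpha> choose u) * (A * P \<omega>) ^ u * (B * X \<omega>) ^ (\<alpha> - u)) *
       (\<Sum>v\<le>\<beta>. of_nat (\<beta> choose v) * (A * Q \<omega>) ^ v * (B * Y \<omega>) ^ (\<beta> - v))"
      by (simp add: binomial_ring)
    also have "\<dots> = (\<Sum>u\<le>\<alpha>. \<Sum>v\<le>\<beta>. (of_nat (\<alpha> choose u) * (A * P \<omega>) ^ u * (B * X \<omega>) ^ (\<alpha> - u)) *
       (of_nat (\<beta> choose v) * (A * Q \<omega>) ^ v * (B * Y \<omega>) ^ (\<beta> - v)))"
      by (rule sum_product)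
    also have "\<dots> = (\<Sum>u\<le>\<alpha>. \<Sum>v\<le>\<beta>. cf u v * T u v \<omega>)"
      by (intro sum.cong refl) (simp add: cf_def T_def power_mult_distrib mult_ac)
    finally show ?thesis .
  qed
  have iT: "integrable M (T u v)" if "u \<le> \<alpha>" "v \<le> \<beta>" for u v
  proof -
    have "integrable M (\<lambda>\<omega>. P \<omega> ^ u * Q \<omega> ^ v * X \<omega> ^ (\<alpha> - u) * Y \<omega> ^ (\<beta> - v))"
      by (rule int_pow4[OF m i]) (use that ab in auto)
    then show ?thesis unfolding T_def by (simp add: mult.assoc)
  qed
  have "(\<integral>\<omega>. (A * P \<omega> + B * X \<omega>) ^ \<alpha> * (A * Q \<omega> + B * Y \<omega>) ^ \<beta> \<partial>M) =
        (\<integral>\<omega>. (\<Sum>u\<le>\<alpha>. \<Sum>v\<le>\<beta>. cf u v * T u v \<omega>) \<partial>M)" by (simp add: pt)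
  also have "\<dots> = (\<Sum>u\<le>\<alpha>. (\<integral>\<omega>. (\<Sum>v\<le>\<beta>. cf u v * T u v \<omega>) \<partial>M))"
    by (rule Bochner_Integration.integral_sum) (use iT in auto)
  also have "\<dots> = (\<Sum>u\<le>\<alpha>. \<Sum>v\<le>\<beta>. (\<integral>\<omega>. cf u v * T u v \<omega> \<partial>M))"
    by (intro sum.cong refl Bochner_Integration.integral_sum) (use iT in auto)
  also have "\<dots> = (\<Sum>u\<le>\<alpha>. \<Sum>v\<le>\<beta>. cf u v * (\<integral>\<omega>. P \<omega> ^ u * Q \<omega> ^ v \<partial>M) * (\<integral>\<omega>. X \<omega> ^ (\<alpha> - u) * Y \<omega> ^ (\<beta> - v) \<partial>M))"
    by (intro sum.cong refl) (simp add: T_def fac)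
  finally show ?thesis unfolding cf_def .
qed

lemma fac:
  assumes jk: "j < n" "k < n" and e: "u + v \<le> 4" "u' + v' \<le> 4"
  shows "(\<integral>\<omega>. (P t \<omega> j ^ u * P t \<omega> k ^ v) * (W t j \<omega> ^ u' * W t k \<omega> ^ v') \<partial>M) =
         (\<integral>\<omega>. P t \<omega> j ^ u * P t \<omega> k ^ v \<partial>M) * (\<integral>\<omega>. W t j \<omega> ^ u' * W t k \<omega> ^ v' \<partial>M)"
proof (rule indep_gen(1)[OF Past_sub Blk_sub Past_Blk_disj])
  have [measurable]: "(\<lambda>\<omega>. P t \<omega> j) \<in> borel_measurable (gen (Past t))" "(\<lambda>\<omega>. P t \<omega> k) \<in> borel_measurable (gen (Past t))"
    using P_meas jk by auto
  have [measurable]: "W t j \<in> borel_measurable (gen (Blk t))" "W t k \<in> borel_measurable (gen (Blk t))"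
    using W_meas_Blk jk by auto
  show "(\<lambda>\<omega>. P t \<omega> j ^ u * P t \<omega> k ^ v) \<in> borel_measurable (gen (Past t))" by measurable
  show "(\<lambda>\<omega>. W t j \<omega> ^ u' * W t k \<omega> ^ v') \<in> borel_measurable (gen (Blk t))" by measurable
  show "integrable M (\<lambda>\<omega>. P t \<omega> j ^ u * P t \<omega> k ^ v)"
    by (rule int_pow2) (use jk e P_measM P_int4 in auto)
  show "integrable M (\<lambda>\<omega>. W t j \<omega> ^ u' * W t k \<omega> ^ v')"
    by (rule int_pow2) (use jk e W_measM W_int4 in auto)
qed

lemma mom_step:
  assumes jk: "j < n" "k < n" and ab: "\<alpha> + \<beta> \<le> 4"
  shows "(\<integral>\<omega>. P (Suc t) \<omega> j ^ \<alpha> * P (Suc t) \<omega> k ^ \<beta> \<partial>M) =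
    (\<Sum>u\<le>\<alpha>. \<Sum>v\<le>\<beta>. (of_nat (\<alpha> choose u) * of_nat (\<beta> choose v) * aa ^ u * aa ^ v * bb ^ (\<alpha> - u) * bb ^ (\<beta> - v))
        * (\<integral>\<omega>. P t \<omega> j ^ u * P t \<omega> k ^ v \<partial>M) * (\<integral>\<omega>. W t j \<omega> ^ (\<alpha> - u) * W t k \<omega> ^ (\<beta> - v) \<partial>M))"
  unfolding P_Suc_k
  by (rule expand) (use jk ab P_measM P_int4 W_measM W_int4 in \<open>auto intro!: fac\<close>)

lemma inv:
  "j < n \<Longrightarrow> k < n \<Longrightarrow> k \<noteq> 0 \<Longrightarrow> j \<noteq> k \<Longrightarrow> u + v \<le> 4 \<Longrightarrow>
   (\<integral>\<omega>. P t \<omega> j ^ u * P t \<omega> k ^ v \<partial>M) = (\<integral>\<omega>. P t \<omega> j ^ u \<partial>M) * nm v"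
proof (induction t arbitrary: j k u v)
  case 0
  have AB: "{Inl j} \<subseteq> Jb" "{Inl k} \<subseteq> Jb" "{Inl j} \<inter> {Inl k} = {}" using 0 by auto
  have [measurable]: "(\<lambda>\<omega>. p0 \<omega> j) \<in> borel_measurable (gen {Inl j})" by (rule gen_p0) simp
  have [measurable]: "(\<lambda>\<omega>. p0 \<omega> k) \<in> borel_measurable (gen {Inl k})" by (rule gen_p0) simp
  have "(\<integral>\<omega>. p0 \<omega> j ^ u * p0 \<omega> k ^ v \<partial>M) = (\<integral>\<omega>. p0 \<omega> j ^ u \<partial>M) * (\<integral>\<omega>. p0 \<omega> k ^ v \<partial>M)"
    by (rule indep_gen(1)[OF AB]) (use 0 p0_int in \<open>auto\<close>)
  then show ?case using normal_mom(2)[OF p0_normal[OF \<open>k < n\<close>]] by (simp add: P_0)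
next
  case (Suc t)
  define Aj where "Aj u1 = of_nat (u choose u1) * aa ^ u1 * bb ^ (u - u1) * (\<integral>\<omega>. P t \<omega> j ^ u1 \<partial>M) * (\<integral>\<omega>. W t j \<omega> ^ (u - u1) \<partial>M)" for u1
  define Bv where "Bv v1 = of_nat (v choose v1) * aa ^ v1 * bb ^ (v - v1) * nm v1 * nm (v - v1)" for v1
  have "(\<integral>\<omega>. P (Suc t) \<omega> j ^ u * P (Suc t) \<omega> k ^ v \<partial>M) = (\<Sum>u1\<le>u. \<Sum>v1\<le>v. Aj u1 * Bv v1)"
    unfolding mom_step[OF Suc.prems(1,2,5)]
  proof (intro sum.cong refl)
    fix u1 v1 assume "u1 \<in> {..u}" "v1 \<in> {..v}"
    then have "u1 + v1 \<le> 4" using Suc.prems by auto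
    then show "(of_nat (u choose u1) * of_nat (v choose v1) * aa ^ u1 * aa ^ v1 * bb ^ (u - u1) * bb ^ (v - v1))
        * (\<integral>\<omega>. P t \<omega> j ^ u1 * P t \<omega> k ^ v1 \<partial>M) * (\<integral>\<omega>. W t j \<omega> ^ (u - u1) * W t k \<omega> ^ (v - v1) \<partial>M)
        = Aj u1 * Bv v1"
      using Suc.IH[OF Suc.prems(1-4)] blk[OF Suc.prems(1-4)]
      by (simp add: Aj_def Bv_def mult_ac)
  qed
  also have "\<dots> = (\<Sum>u1\<le>u. Aj u1) * (\<Sum>v1\<le>v. Bv v1)" by (rule sum_product[symmetric])
  also have "(\<Sum>v1\<le>v. Bv v1) = nm v" unfolding Bv_def by (rule nsum) (use Suc.prems in auto)
  also have "(\<Sum>u1\<le>u. Aj u1) = (\<integral>\<omega>. P (Suc t) \<omega> j ^ u \<partial>M)"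
    using mom_step[OF Suc.prems(1) Suc.prems(1), of u 0 t] Suc.prems by (simp add: Aj_def)
  finally show ?case .
qed

definition "em \<alpha> t = (\<integral>\<omega>. P t \<omega> 0 ^ \<alpha> \<partial>M)"
definition "mo k = Emin lam k"

lemma n0: "0 < n" using n1 by simp

lemma em_step: "\<alpha> \<le> 4 \<Longrightarrow>
  em \<alpha> (Suc t) = (\<Sum>u\<le>\<alpha>. of_nat (\<alpha> choose u) * aa ^ u * bb ^ (\<alpha> - u) * em u t * mo (\<alpha> - u))"
  using mom_step[OF n0 n0, of \<alpha> 0 t] by (simp add: em_def mo_def W0_mom mult_ac)

lemma em0: "em 0 t = 1" by (simp add: em_def prob_space)
lemma mo0: "mo 0 = 1" using W0_mom[of 0 0] by (simp add: mo_def prob_space)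

lemma em_rec:
  "em 1 (Suc t) = aa * em 1 t + bb * mo 1"
  "em 2 (Suc t) = aa\<^sup>2 * em 2 t + (2 * aa * bb * em 1 t * mo 1 + bb\<^sup>2 * mo 2)"
  "em 3 (Suc t) = aa ^ 3 * em 3 t + (3 * aa\<^sup>2 * bb * em 2 t * mo 1 + 3 * aa * bb\<^sup>2 * em 1 t * mo 2 + bb ^ 3 * mo 3)"
  "em 4 (Suc t) = aa ^ 4 * em 4 t + (4 * aa ^ 3 * bb * em 3 t * mo 1 + 6 * aa\<^sup>2 * bb\<^sup>2 * em 2 t * mo 2 + 4 * aa * bb ^ 3 * em 1 t * mo 3 + bb ^ 4 * mo 4)"
  using em_step[of 1 t] em_step[of 2 t] em_step[of 3 t] em_step[of 4 t]
  by (simp_all add: sum_atMost1 sum_atMost2 sum_atMost3 sum_atMost4 binoms em0 mo0 algebra_simps)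

lemma aa_bounds: "0 \<le> aa" "aa < 1" using c0 c1 by (auto simp: aa_def)
lemma aak: "k > 0 \<Longrightarrow> \<bar>aa ^ k\<bar> < 1"
  using power_strict_mono[OF aa_bounds(2) aa_bounds(1), of k] aa_bounds by simp

definition "L1 = bb * mo 1 / (1 - aa)"
definition "L2 = (2 * aa * bb * L1 * mo 1 + bb\<^sup>2 * mo 2) / (1 - aa\<^sup>2)"
definition "L3 = (3 * aa\<^sup>2 * bb * L2 * mo 1 + 3 * aa * bb\<^sup>2 * L1 * mo 2 + bb ^ 3 * mo 3) / (1 - aa ^ 3)"
definition "L4 = (4 * aa ^ 3 * bb * L3 * mo 1 + 6 * aa\<^sup>2 * bb\<^sup>2 * L2 * mo 2 + 4 * aa * bb ^ 3 * L1 * mo 3 + bb ^ 4 * mo 4) / (1 - aa ^ 4)"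

lemma lims: "(\<lambda>t. em 1 t) \<longlonglongrightarrow> L1" "(\<lambda>t. em 2 t) \<longlonglongrightarrow> L2"
  "(\<lambda>t. em 3 t) \<longlonglongrightarrow> L3" "(\<lambda>t. em 4 t) \<longlonglongrightarrow> L4"
proof -
  show l1: "(\<lambda>t. em 1 t) \<longlonglongrightarrow> L1" unfolding L1_def
    by (rule lin_rec_lim[where x="em 1" and r=aa and g="\<lambda>t. bb * mo 1", OF _ em_rec(1)]) (use aak[of 1] in auto)
  show l2: "(\<lambda>t. em 2 t) \<longlonglongrightarrow> L2" unfolding L2_def
    by (rule lin_rec_lim[where x="em 2" and r="aa\<^sup>2" and g="\<lambda>t. 2 * aa * bb * em 1 t * mo 1 + bb\<^sup>2 * mo 2", OF _ em_rec(2)]) (use aak[of 2] l1 in \<open>auto intro!: tendsto_intros\<close>)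
  show l3: "(\<lambda>t. em 3 t) \<longlonglongrightarrow> L3" unfolding L3_def
    by (rule lin_rec_lim[where x="em 3" and r="aa ^ 3" and g="\<lambda>t. 3 * aa\<^sup>2 * bb * em 2 t * mo 1 + 3 * aa * bb\<^sup>2 * em 1 t * mo 2 + bb ^ 3 * mo 3", OF _ em_rec(3)]) (use aak[of 3] l1 l2 in \<open>auto intro!: tendsto_intros\<close>)
  show "(\<lambda>t. em 4 t) \<longlonglongrightarrow> L4" unfolding L4_def
    by (rule lin_rec_lim[where x="em 4" and r="aa ^ 4" and g="\<lambda>t. 4 * aa ^ 3 * bb * em 3 t * mo 1 + 6 * aa\<^sup>2 * bb\<^sup>2 * em 2 t * mo 2 + 4 * aa * bb ^ 3 * em 1 t * mo 3 + bb ^ 4 * mo 4", OF _ em_rec(4)]) (use aak[of 4] l1 l2 l3 in \<open>auto intro!: tendsto_intros\<close>)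
qed

lemma bb2: "bb\<^sup>2 = 1 - aa\<^sup>2" using ab1 by simp

lemma L2_val: "L2 = mo 2 + (2 - 2 * c) / c * (mo 1)\<^sup>2"
proof -
  have c: "1 - aa = c" by (simp add: aa_def)
  show ?thesis using alg(1)[OF aa_bounds bb2 L1_def L2_def L3_def L4_def] by (simp only: c)
qed

lemmas L4_val = alg(2)[OF aa_bounds bb2 L1_def L2_def L3_def L4_def]


lemma var_affine:
  fixes S :: "'a \<Rightarrow> real"
  assumes i1: "integrable M S" and i2: "integrable M (\<lambda>\<omega>. (S \<omega>)\<^sup>2)"
  shows "(\<integral>\<omega>. (A * S \<omega> + B - (\<integral>\<omega>'. A * S \<omega>' + B \<partial>M))\<^sup>2 \<partial>M) =
         A\<^sup>2 * ((\<integral>\<omega>. (S \<omega>)\<^sup>2 \<partial>M) - (\<integral>\<omega>. S \<omega> \<partial>M)\<^sup>2)"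
proof -
  define m where "m = (\<integral>\<omega>. S \<omega> \<partial>M)"
  have "(\<integral>\<omega>'. A * S \<omega>' + B \<partial>M) = A * m + B"
    using i1 by (simp add: m_def prob_space)
  then have "(\<integral>\<omega>. (A * S \<omega> + B - (\<integral>\<omega>'. A * S \<omega>' + B \<partial>M))\<^sup>2 \<partial>M) =
       (\<integral>\<omega>. A\<^sup>2 * (S \<omega>)\<^sup>2 + (- 2 * A\<^sup>2 * m) * S \<omega> + A\<^sup>2 * m\<^sup>2 \<partial>M)"
    by (intro Bochner_Integration.integral_cong) (simp_all add: power2_eq_square algebra_simps)
  also have "\<dots> = A\<^sup>2 * (\<integral>\<omega>. (S \<omega>)\<^sup>2 \<partial>M) + (- 2 * A\<^sup>2 * m) * m + A\<^sup>2 * m\<^sup>2"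
    using i1 i2 by (simp add: m_def prob_space)
  finally show ?thesis by (simp add: m_def power2_eq_square algebra_simps)
qed

lemma split0: "(\<Sum>k<n. f k) = f 0 + (\<Sum>k\<in>{1..<n}. f k)"
proof -
  have "{..<n} = insert 0 {1..<n}" using n1 by auto
  then show ?thesis by simp
qed

lemma var_main:
  fixes T :: nat
  defines "S \<equiv> \<lambda>\<omega>. \<Sum>k<n. (P T \<omega> k)\<^sup>2"
  shows "(\<integral>\<omega>. (S \<omega>)\<^sup>2 \<partial>M) - (\<integral>\<omega>. S \<omega> \<partial>M)\<^sup>2 = em 4 T - (em 2 T)\<^sup>2 + 2 * (real n - 1)"
    and "integrable M S" and "integrable M (\<lambda>\<omega>. (S \<omega>)\<^sup>2)"
proof -
  define Q where "Q j k = (\<integral>\<omega>. P T \<omega> j ^ 2 * P T \<omega> k ^ 2 \<partial>M)" for j k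
  have iQ: "integrable M (\<lambda>\<omega>. P T \<omega> j ^ 2 * P T \<omega> k ^ 2)" if "j < n" "k < n" for j k
    by (rule int_pow2) (use that P_measM P_int4 in auto)
  have iP: "integrable M (\<lambda>\<omega>. P T \<omega> j ^ 2)" if "j < n" for j
    using int_pow2[OF P_measM[OF that] P_measM[OF that] P_int4[OF that] P_int4[OF that], of 2 0] by simp
  have P2: "(\<integral>\<omega>. P T \<omega> k ^ 2 \<partial>M) = 1" if "k \<in> {1..<n}" for k
    using inv[OF n0, of k 0 2 T] that by (simp add: prob_space nm_vals)
  have Q00: "Q 0 0 = em 4 T" by (simp add: Q_def em_def power2_eq_square power4_eq_xxxx mult_ac)
  have Q0k: "Q 0 k = em 2 T" if "k \<in> {1..<n}" for k
    using inv[OF n0, of k 2 2 T] that by (simp add: Q_def em_def nm_vals)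
  have Qk0: "Q k 0 = em 2 T" if "k \<in> {1..<n}" for k
    using Q0k[OF that] by (simp add: Q_def mult.commute)
  have Qkk: "Q k k = 3" if "k \<in> {1..<n}" for k
  proof -
    have "(\<integral>\<omega>. P T \<omega> 0 ^ 0 * P T \<omega> k ^ 4 \<partial>M) = (\<integral>\<omega>. P T \<omega> 0 ^ 0 \<partial>M) * nm 4"
      by (rule inv) (use that n0 in auto)
    then show ?thesis by (simp add: Q_def prob_space nm_vals power2_eq_square power4_eq_xxxx mult_ac)
  qed
  have Qjk: "Q j k = 1" if "j \<in> {1..<n}" "k \<in> {1..<n}" "j \<noteq> k" for j k
    using inv[of j k 2 2 T] that P2[of j] by (simp add: Q_def nm_vals)
  have eS2: "(S \<omega>)\<^sup>2 = (\<Sum>j<n. \<Sum>k<n. P T \<omega> j ^ 2 * P T \<omega> k ^ 2)" for \<omega>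
    unfolding S_def power2_eq_square[of "sum _ _"] sum_product by simp
  show iS: "integrable M S" unfolding S_def using iP by auto
  show iS2: "integrable M (\<lambda>\<omega>. (S \<omega>)\<^sup>2)" unfolding eS2 by (intro Bochner_Integration.integrable_sum iQ) auto
  have ES: "(\<integral>\<omega>. S \<omega> \<partial>M) = em 2 T + (real n - 1)"
  proof -
    have "(\<integral>\<omega>. S \<omega> \<partial>M) = (\<Sum>k<n. (\<integral>\<omega>. P T \<omega> k ^ 2 \<partial>M))"
      unfolding S_def by (rule Bochner_Integration.integral_sum) (use iP in auto)
    also have "\<dots> = em 2 T + (\<Sum>k\<in>{1..<n}. 1)" unfolding split0 by (simp add: em_def P2)
    also have "\<dots> = em 2 T + (real n - 1)" using n1 by (simp add: of_nat_diff)
    finally show ?thesis .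
  qed
  have row: "(\<Sum>k<n. Q j k) = em 2 T + 3 + (real n - 2)" if j: "j \<in> {1..<n}" for j
  proof -
    have "(\<Sum>k<n. Q j k) = em 2 T + (\<Sum>k\<in>{1..<n}. Q j k)" unfolding split0 using Qk0[OF j] by simp
    also have "(\<Sum>k\<in>{1..<n}. Q j k) = Q j j + (\<Sum>k\<in>{1..<n} - {j}. Q j k)"
      using j by (simp add: sum.remove)
    also have "(\<Sum>k\<in>{1..<n} - {j}. Q j k) = (\<Sum>k\<in>{1..<n} - {j}. 1)"
      by (intro sum.cong refl Qjk) (use j in auto)
    also have "\<dots> = real n - 2" using j by (simp add: of_nat_diff)
    finally show ?thesis using Qkk[OF j] by simp
  qed
  have ES2: "(\<integral>\<omega>. (S \<omega>)\<^sup>2 \<partial>M) = em 4 T + (real n - 1) * em 2 T + (real n - 1) * (em 2 T + 1 + real n)"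
  proof -
    have "(\<integral>\<omega>. (S \<omega>)\<^sup>2 \<partial>M) = (\<Sum>j<n. (\<integral>\<omega>. (\<Sum>k<n. P T \<omega> j ^ 2 * P T \<omega> k ^ 2) \<partial>M))"
      unfolding eS2 by (rule Bochner_Integration.integral_sum) (intro Bochner_Integration.integrable_sum iQ, auto)
    also have "\<dots> = (\<Sum>j<n. \<Sum>k<n. Q j k)"
      unfolding Q_def by (intro sum.cong refl Bochner_Integration.integral_sum iQ) auto
    also have "\<dots> = (\<Sum>k<n. Q 0 k) + (\<Sum>j\<in>{1..<n}. em 2 T + 3 + (real n - 2))"
      by (subst split0) (simp add: row)
    also have "(\<Sum>k<n. Q 0 k) = em 4 T + (real n - 1) * em 2 T"
      unfolding split0 using n1 by (simp add: Q00 Q0k of_nat_diff)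
    also have "(\<Sum>j\<in>{1..<n}. em 2 T + 3 + (real n - 2)) = (real n - 1) * (em 2 T + 1 + real n)"
      using n1 by (simp add: of_nat_diff algebra_simps)
    finally show ?thesis .
  qed
  show "(\<integral>\<omega>. (S \<omega>)\<^sup>2 \<partial>M) - (\<integral>\<omega>. S \<omega> \<partial>M)\<^sup>2 = em 4 T - (em 2 T)\<^sup>2 + 2 * (real n - 1)"
    unfolding ES ES2 by (simp add: power2_eq_square algebra_simps)
qed

end

theorem theorem4:
  fixes M :: "'a measure" and n lam :: nat and c d s0 :: real
    and X0 :: "nat \<Rightarrow> real" and p0 :: "'a \<Rightarrow> nat \<Rightarrow> real"
    and xi :: "'a \<Rightarrow> nat \<Rightarrow> nat \<Rightarrow> nat \<Rightarrow> real"
  assumes "prob_space M"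
    and "n \<ge> 1" and "lam \<ge> 1" and "0 < c" and "c \<le> 1" and "d > 0" and "s0 > 0"
    and indep: "prob_space.indep_vars M (\<lambda>_. borel)
        (\<lambda>j \<omega>. case j of Inl k \<Rightarrow> p0 \<omega> k | Inr (t, i, k) \<Rightarrow> xi \<omega> t i k)
        ({Inl k | k. k < n} \<union> {Inr (t, i, k) | t i k. i < lam \<and> k < n})"
    and p0_normal: "\<And>k. k < n \<Longrightarrow> distributed M lborel (\<lambda>\<omega>. p0 \<omega> k) std_normal_density"
    and xi_normal: "\<And>t i k. i < lam \<Longrightarrow> k < n \<Longrightarrow>
                      distributed M lborel (\<lambda>\<omega>. xi \<omega> t i k) std_normal_density"
  defines "sig \<equiv> \<lambda>t \<omega>. fst (snd (csa_state (\<lambda>x. x 0) n lam c d X0 s0 (p0 \<omega>) (xi \<omega>) t))"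
    and "p \<equiv> \<lambda>t \<omega>. snd (snd (csa_state (\<lambda>x. x 0) n lam c d X0 s0 (p0 \<omega>) (xi \<omega>) t))"
    and "a \<equiv> 1 - c"
  shows
    "(\<forall>t. (let L = (\<lambda>\<omega>. ln (sig (Suc t) \<omega> / sig t \<omega>)) in
             (LINT \<omega>|M. (L \<omega> - (LINT \<omega>'|M. L \<omega>'))\<^sup>2))
          = c\<^sup>2 / (4 * d\<^sup>2 * (real n)\<^sup>2) *
            ((LINT \<omega>|M. (p (Suc t) \<omega> 0) ^ 4) - (LINT \<omega>|M. (p (Suc t) \<omega> 0) ^ 2)\<^sup>2
             + 2 * (real n - 1)))
     \<and> ((\<lambda>t. LINT \<omega>|M. (p (Suc t) \<omega> 0) ^ 2)
          \<longlonglongrightarrow> Emin lam 2 + (2 - 2 * c) / c * (Emin lam 1)\<^sup>2)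
     \<and> ((\<lambda>t. LINT \<omega>|M. (p t \<omega> 0) ^ 4)
          \<longlonglongrightarrow> (1 - a\<^sup>2)\<^sup>2 / (1 - a ^ 4) *
              (Emin lam 4
               + 4 * (a * (1 + a + 2 * a\<^sup>2) / (1 - a ^ 3)) * Emin lam 3 * Emin lam 1
               + 6 * (a\<^sup>2 / (1 - a\<^sup>2)) * (Emin lam 2)\<^sup>2
               + 12 * (a ^ 3 * (1 + 2 * a + 3 * a\<^sup>2) / ((1 - a\<^sup>2) * (1 - a ^ 3)))
                    * Emin lam 2 * (Emin lam 1)\<^sup>2
               + 24 * (a ^ 6 / ((1 - a) * (1 - a\<^sup>2) * (1 - a ^ 3))) * (Emin lam 1) ^ 4))"
  proof -
  interpret csa M n lam c d s0 X0 p0 xi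
    by (intro csa.intro csa_axioms.intro) (use assms in auto)
  have sigE: "sig = Sg" by (intro ext) (simp add: sig_def Sg_def)
  have pE: "p = P" by (intro ext) (simp add: p_def P_def)
  have aE: "a = aa" by (simp add: a_def aa_def)
  have part1: "(let L = (\<lambda>\<omega>. ln (sig (Suc t) \<omega> / sig t \<omega>)) in
             (LINT \<omega>|M. (L \<omega> - (LINT \<omega>'|M. L \<omega>'))\<^sup>2))
          = c\<^sup>2 / (4 * d\<^sup>2 * (real n)\<^sup>2) *
            ((LINT \<omega>|M. (p (Suc t) \<omega> 0) ^ 4) - (LINT \<omega>|M. (p (Suc t) \<omega> 0) ^ 2)\<^sup>2
             + 2 * (real n - 1))" for t
  proof -
    define S where "S = (\<lambda>\<omega>. \<Sum>k<n. (P (Suc t) \<omega> k)\<^sup>2)"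
    define A where "A = c / (2 * d) / real n"
    define B where "B = - (c / (2 * d))"
    have Lr: "ln (Sg (Suc t) \<omega> / Sg t \<omega>) = A * S \<omega> + B" for \<omega>
      unfolding ln_ratio A_def B_def S_def by (simp add: algebra_simps)
    have "(let L = (\<lambda>\<omega>. ln (sig (Suc t) \<omega> / sig t \<omega>)) in
             (LINT \<omega>|M. (L \<omega> - (LINT \<omega>'|M. L \<omega>'))\<^sup>2)) =
          (\<integral>\<omega>. (A * S \<omega> + B - (\<integral>\<omega>'. A * S \<omega>' + B \<partial>M))\<^sup>2 \<partial>M)"
      by (simp add: sigE Lr Let_def)
    also have "\<dots> = A\<^sup>2 * ((\<integral>\<omega>. (S \<omega>)\<^sup>2 \<partial>M) - (\<integral>\<omega>. S \<omega> \<partial>M)\<^sup>2)"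
      by (rule var_affine) (use var_main(2,3)[of "Suc t"] in \<open>simp_all add: S_def\<close>)
    also have "(\<integral>\<omega>. (S \<omega>)\<^sup>2 \<partial>M) - (\<integral>\<omega>. S \<omega> \<partial>M)\<^sup>2 = em 4 (Suc t) - (em 2 (Suc t))\<^sup>2 + 2 * (real n - 1)"
      using var_main(1)[of "Suc t"] by (simp add: S_def)
    also have "A\<^sup>2 = c\<^sup>2 / (4 * d\<^sup>2 * (real n)\<^sup>2)"
      by (simp add: A_def power_divide power_mult_distrib)
    finally show ?thesis by (simp add: em_def pE)
  qed
  have part2: "(\<lambda>t. LINT \<omega>|M. (p (Suc t) \<omega> 0) ^ 2) \<longlonglongrightarrow> Emin lam 2 + (2 - 2 * c) / c * (Emin lam 1)\<^sup>2"
  proof -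
    have "(\<lambda>t. em 2 (Suc t)) \<longlonglongrightarrow> L2" using LIMSEQ_Suc[OF lims(2)] by simp
    then show ?thesis by (simp add: em_def pE L2_val mo_def)
  qed
  have part3: "(\<lambda>t. LINT \<omega>|M. (p t \<omega> 0) ^ 4)
          \<longlonglongrightarrow> (1 - a\<^sup>2)\<^sup>2 / (1 - a ^ 4) *
              (Emin lam 4
               + 4 * (a * (1 + a + 2 * a\<^sup>2) / (1 - a ^ 3)) * Emin lam 3 * Emin lam 1
               + 6 * (a\<^sup>2 / (1 - a\<^sup>2)) * (Emin lam 2)\<^sup>2
               + 12 * (a ^ 3 * (1 + 2 * a + 3 * a\<^sup>2) / ((1 - a\<^sup>2) * (1 - a ^ 3)))
                    * Emin lam 2 * (Emin lam 1)\<^sup>2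
               + 24 * (a ^ 6 / ((1 - a) * (1 - a\<^sup>2) * (1 - a ^ 3))) * (Emin lam 1) ^ 4)"
    using lims(4) unfolding L4_val by (simp add: em_def pE aE mo_def)
  show ?thesis using part1 part2 part3 by blast
qed

end
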